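(* Let $\sigma$ be a connected non-crossing partition and let $\tau=1[\rho]$ for some non-crossing partition $\rho$. If $\sigma$ and $\tau$ are nc-equivalent, then $1[\sigma]$ and $\tau1=1[\rho]1$ are nc-equivalent.
   Context: Set partitions are written in canonical sequential form (restricted growth words). Pattern containment means having a subsequence order-isomorphic to the pattern; a partition is non-crossing if it avoids $1212$. Bracket notation: in a word built from letters and bracketed partitions, $[\sigma]$ stands for $\sigma+r$ (add $r$ to every letter), where $r$ is the number of distinct symbols appearing before it; so $1[\rho]$ is $1$ followed by $\rho+1$, and $1[\rho]1$ appends a final $1$. $\alpha[\beta]$ is $\alpha$ followed by $\beta$ shifted by the number of blocks of $\alpha$; a partition is connected if it cannot be written as $\alpha[\beta]$ with $\alpha,\beta$ nonempty. Patterns $\alpha,\beta$ are nc-equivalent if for every $n\ge0$ the number of partitions of $[n]$ avoiding $1212$ and $\alpha$ equals the number avoiding $1212$ and $\beta$. *)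

theory Defs
  imports Main
begin

text \<open>Set partitions in canonical sequential form: restricted growth words over
positive integers.\<close>

definition rgf :: "nat list \<Rightarrow> bool" where
  "rgf w \<longleftrightarrow> (\<forall>i < length w. 1 \<le> w ! i \<and> w ! i \<le> Suc (Max (insert 0 (set (take i w)))))"

definition contains :: "nat list \<Rightarrow> nat list \<Rightarrow> bool" where
  "contains w p \<longleftrightarrow> (\<exists>f :: nat \<Rightarrow> nat.
      (\<forall>i j. i < j \<longrightarrow> j < length p \<longrightarrow> f i < f j) \<and>
      (\<forall>i < length p. f i < length w) \<and>
      (\<forall>i < length p. \<forall>j < length p. (p ! i \<le> p ! j \<longleftrightarrow> w ! f i \<le> w ! f j)))"

definition avoids :: "nat list \<Rightarrow> nat list \<Rightarrow> bool" where
  "avoids w p \<longleftrightarrow> \<not> contains w p"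

definition noncrossing :: "nat list \<Rightarrow> bool" where
  "noncrossing w \<longleftrightarrow> avoids w [1,2,1,2]"

definition nblocks :: "nat list \<Rightarrow> nat" where
  "nblocks w = card (set w)"

definition shift :: "nat \<Rightarrow> nat list \<Rightarrow> nat list" where
  "shift r w = map (\<lambda>x. x + r) w"

definition concat_part :: "nat list \<Rightarrow> nat list \<Rightarrow> nat list" where
  "concat_part \<alpha> \<beta> = \<alpha> @ shift (nblocks \<alpha>) \<beta>"

definition connected_part :: "nat list \<Rightarrow> bool" where
  "connected_part \<sigma> \<longleftrightarrow>
     \<not> (\<exists>\<alpha> \<beta>. rgf \<alpha> \<and> rgf \<beta> \<and> \<alpha> \<noteq> [] \<and> \<beta> \<noteq> [] \<and> \<sigma> = concat_part \<alpha> \<beta>)"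

definition nc_count :: "nat list \<Rightarrow> nat \<Rightarrow> nat" where
  "nc_count \<alpha> n = card {w. rgf w \<and> length w = n \<and> noncrossing w \<and> avoids w \<alpha>}"

definition nc_equiv :: "nat list \<Rightarrow> nat list \<Rightarrow> bool" where
  "nc_equiv \<alpha> \<beta> \<longleftrightarrow> (\<forall>n. nc_count \<alpha> n = nc_count \<beta> n)"

end

theory Submission
  imports Defs "HOL-Library.Sublist"
begin

definition oiso :: "nat list \<Rightarrow> nat list \<Rightarrow> bool" where
  "oiso q p \<longleftrightarrow> length q = length p \<and>
     (\<forall>i<length p. \<forall>j<length p. (p ! i \<le> p ! j \<longleftrightarrow> q ! i \<le> q ! j))"

lemma subseq_idx:
  assumes "\<forall>i j. i < j \<longrightarrow> j < m \<longrightarrow> f i < f j" "\<forall>i<m. f i < length w"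
  shows "subseq (map (\<lambda>i. w ! f i) [0..<m]) w"
  using assms
proof (induction m arbitrary: w)
  case 0 then show ?case by simp
next
  case (Suc m)
  have fm: "f m < length w" using Suc.prems by auto
  have "subseq (map (\<lambda>i. take (f m) w ! f i) [0..<m]) (take (f m) w)"
    using Suc.prems by (intro Suc.IH) auto
  moreover have "map (\<lambda>i. take (f m) w ! f i) [0..<m] = map (\<lambda>i. w ! f i) [0..<m]"
    using Suc.prems by auto
  ultimately have 1: "subseq (map (\<lambda>i. w ! f i) [0..<m]) (take (f m) w)" by simp
  have "subseq (map (\<lambda>i. w ! f i) [0..<m] @ [w ! f m]) (take (f m) w @ [w ! f m] @ drop (Suc (f m)) w)"
    by (rule list_emb_append_mono[OF 1]) simp
  moreover have "take (f m) w @ [w ! f m] @ drop (Suc (f m)) w = w"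
    using fm by (simp add: id_take_nth_drop[symmetric])
  ultimately show ?case by simp
qed

lemma subseq_idx_conv:
  assumes "subseq q w"
  shows "\<exists>f. (\<forall>i j. i < j \<longrightarrow> j < length q \<longrightarrow> f i < f j) \<and> (\<forall>i<length q. f i < length w)
     \<and> (\<forall>i<length q. q ! i = w ! f i)"
  using assms
proof (induction rule: list_emb.induct)
  case (list_emb_Nil ys) then show ?case by auto
next
  case (list_emb_Cons xs ys y)
  then obtain f where f: "(\<forall>i j. i < j \<longrightarrow> j < length xs \<longrightarrow> f i < f j) \<and> (\<forall>i<length xs. f i < length ys)
     \<and> (\<forall>i<length xs. xs ! i = ys ! f i)" by blast
  show ?case by (rule exI[of _ "\<lambda>i. Suc (f i)"]) (use f in auto)
next
  case (list_emb_Cons2 x y xs ys)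
  then obtain f where f: "(\<forall>i j. i < j \<longrightarrow> j < length xs \<longrightarrow> f i < f j) \<and> (\<forall>i<length xs. f i < length ys)
     \<and> (\<forall>i<length xs. xs ! i = ys ! f i)" by blast
  show ?case
  proof (rule exI[of _ "\<lambda>i. case i of 0 \<Rightarrow> 0 | Suc k \<Rightarrow> Suc (f k)"], intro conjI allI impI)
    fix i j assume "i < j" "j < length (x # xs)" then show "(case i of 0 \<Rightarrow> 0 | Suc k \<Rightarrow> Suc (f k)) < (case j of 0 \<Rightarrow> 0 | Suc k \<Rightarrow> Suc (f k))"
      using f by (cases i; cases j) auto
  next
    fix i assume "i < length (x # xs)" then show "(case i of 0 \<Rightarrow> 0 | Suc k \<Rightarrow> Suc (f k)) < length (y # ys)"
      using f by (cases i) auto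
  next
    fix i assume "i < length (x # xs)" then show "(x # xs) ! i = (y # ys) ! (case i of 0 \<Rightarrow> 0 | Suc k \<Rightarrow> Suc (f k))"
      using f list_emb_Cons2 by (cases i) auto
  qed
qed

lemma contains_conv: "contains w p \<longleftrightarrow> (\<exists>q. subseq q w \<and> oiso q p)"
proof
  assume "contains w p"
  then obtain f where f: "\<forall>i j. i < j \<longrightarrow> j < length p \<longrightarrow> f i < f j" "\<forall>i < length p. f i < length w"
      "\<forall>i < length p. \<forall>j < length p. (p ! i \<le> p ! j \<longleftrightarrow> w ! f i \<le> w ! f j)"
    unfolding contains_def by blast
  show "\<exists>q. subseq q w \<and> oiso q p"
    by (rule exI[of _ "map (\<lambda>i. w ! f i) [0..<length p]"]) (use f subseq_idx[OF f(1,2)] in \<open>auto simp: oiso_def\<close>)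
next
  assume "\<exists>q. subseq q w \<and> oiso q p"
  then obtain q where q: "subseq q w" "oiso q p" by blast
  from subseq_idx_conv[OF q(1)] obtain f where f: "(\<forall>i j. i < j \<longrightarrow> j < length q \<longrightarrow> f i < f j)" "(\<forall>i<length q. f i < length w)"
     "(\<forall>i<length q. q ! i = w ! f i)" by blast
  show "contains w p" unfolding contains_def
    by (rule exI[of _ f]) (use f q(2) in \<open>auto simp: oiso_def\<close>)
qed

definition mx :: "nat list \<Rightarrow> nat" where "mx w = Max (insert 0 (set w))"

lemma le_Suc_mx: "x \<le> Suc (mx xs) \<longleftrightarrow> x \<le> 1 \<or> (\<exists>y\<in>set xs. x \<le> Suc y)"
proof -
  have "x \<le> Suc (mx xs) \<longleftrightarrow> x - 1 \<le> mx xs" by arith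
  also have "\<dots> \<longleftrightarrow> (\<exists>a\<in>insert 0 (set xs). x - 1 \<le> a)" unfolding mx_def by (subst Max_ge_iff) auto
  also have "\<dots> \<longleftrightarrow> x \<le> 1 \<or> (\<exists>y\<in>set xs. x \<le> Suc y)" by (auto simp: le_diff_conv)
  finally show ?thesis .
qed

lemma mx_ge: "y \<in> set w \<Longrightarrow> y \<le> mx w"
  unfolding mx_def by simp

lemma mx_in: "w \<noteq> [] \<Longrightarrow> mx w \<in> set w"
proof -
  assume "w \<noteq> []"
  have "mx w \<in> insert 0 (set w)" unfolding mx_def by (rule Max_in) auto
  moreover have "mx w = 0 \<Longrightarrow> mx w \<in> set w \<or> set w \<subseteq> {0}"
    using mx_ge by fastforce
  ultimately show ?thesis using \<open>w \<noteq> []\<close> by (cases w) (auto simp: mx_def)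
qed

lemma rgf_Nil[simp]: "rgf []" unfolding rgf_def by simp

lemma rgf_snoc: "rgf (xs @ [x]) \<longleftrightarrow> rgf xs \<and> 1 \<le> x \<and> (x \<le> 1 \<or> (\<exists>y\<in>set xs. x \<le> Suc y))"
proof -
  have "rgf (xs @ [x]) \<longleftrightarrow> rgf xs \<and> 1 \<le> x \<and> x \<le> Suc (Max (insert 0 (set xs)))"
    unfolding rgf_def by (auto simp: nth_append less_Suc_eq)
  then show ?thesis using le_Suc_mx unfolding mx_def by simp
qed

lemma rgf_prefix: "rgf (xs @ ys) \<Longrightarrow> rgf xs"
  by (induction ys rule: rev_induct) (auto simp: rgf_snoc simp flip: append_assoc)

lemma mx_snoc: "mx (xs @ [x]) = max x (mx xs)"
proof -
  have "insert 0 (set (xs @ [x])) = insert x (insert 0 (set xs))" by auto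
  then show ?thesis unfolding mx_def by (simp add: Max.insert)
qed

lemma rgf_set: "rgf w \<Longrightarrow> set w = {1..mx w}"
proof (induction w rule: rev_induct)
  case Nil then show ?case by (simp add: mx_def)
next
  case (snoc x xs)
  then have ih: "set xs = {1..mx xs}" and x: "1 \<le> x" "x \<le> 1 \<or> (\<exists>y\<in>set xs. x \<le> Suc y)"
    by (auto simp: rgf_snoc)
  have "x \<le> Suc (mx xs)" using x le_Suc_mx by blast
  then show ?case using ih x(1) by (auto simp: mx_snoc)
qed

lemma rgf_pos: "rgf w \<Longrightarrow> x \<in> set w \<Longrightarrow> 1 \<le> x"
  using rgf_set by auto

lemma nblocks_rgf: "rgf w \<Longrightarrow> nblocks w = mx w"
  unfolding nblocks_def by (simp add: rgf_set)

lemma rgf_Cons: "rgf w \<Longrightarrow> w \<noteq> [] \<Longrightarrow> \<exists>w'. w = 1 # w'"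
  unfolding rgf_def by (cases w) (force simp: )+

lemma rgf_bound: "rgf w \<Longrightarrow> set w \<subseteq> {0..length w}"
proof -
  assume r: "rgf w"
  have "card (set w) \<le> length w" by (rule card_length)
  moreover have "card (set w) = mx w" using rgf_set[OF r] by simp
  ultimately show ?thesis using mx_ge by fastforce
qed

lemma rgf_concat: "rgf \<alpha> \<Longrightarrow> rgf \<beta> \<Longrightarrow> rgf (\<alpha> @ map (\<lambda>x. x + mx \<alpha>) \<beta>)"
proof (induction \<beta> rule: rev_induct)
  case Nil then show ?case by simp
next
  case (snoc x xs)
  then have ih: "rgf (\<alpha> @ map (\<lambda>x. x + mx \<alpha>) xs)" and x: "1 \<le> x" "x \<le> 1 \<or> (\<exists>y\<in>set xs. x \<le> Suc y)"
    by (auto simp: rgf_snoc)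
  have "x + mx \<alpha> \<le> 1 \<or> (\<exists>y\<in>set (\<alpha> @ map (\<lambda>x. x + mx \<alpha>) xs). x + mx \<alpha> \<le> Suc y)"
  proof (cases "x \<le> 1")
    case True
    then show ?thesis using mx_in[of \<alpha>] x(1) by (cases "\<alpha> = []") (auto simp: mx_def intro!: bexI[of _ "mx \<alpha>"])
  next
    case False
    then obtain y where "y \<in> set xs" "x \<le> Suc y" using x by auto
    then show ?thesis by (intro disjI2 bexI[of _ "y + mx \<alpha>"]) auto
  qed
  then show ?case using ih x rgf_snoc[of "\<alpha> @ map (\<lambda>x. x + mx \<alpha>) xs" "x + mx \<alpha>"] by simp
qed

lemma rgf_suffix: "rgf (\<alpha> @ \<gamma>) \<Longrightarrow> \<forall>x\<in>set \<gamma>. mx \<alpha> < x \<Longrightarrow> rgf (map (\<lambda>x. x - mx \<alpha>) \<gamma>)"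
proof (induction \<gamma> rule: rev_induct)
  case Nil then show ?case by simp
next
  case (snoc x xs)
  then have ih: "rgf (map (\<lambda>x. x - mx \<alpha>) xs)" and x: "1 \<le> x" "x \<le> 1 \<or> (\<exists>y\<in>set (\<alpha> @ xs). x \<le> Suc y)"
      and gt: "mx \<alpha> < x" "\<forall>y\<in>set xs. mx \<alpha> < y"
    by (auto simp: rgf_snoc simp flip: append_assoc)
  have "x - mx \<alpha> \<le> 1 \<or> (\<exists>y\<in>set (map (\<lambda>x. x - mx \<alpha>) xs). x - mx \<alpha> \<le> Suc y)"
    using x(2) gt mx_ge[of _ \<alpha>] by (fastforce)
  then show ?case using ih gt by (simp add: rgf_snoc)
qed

lemma oiso_Cons: "oiso (y#q) (x#p) \<longleftrightarrow> oiso q p \<and>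
   (\<forall>i<length p. (x \<le> p!i \<longleftrightarrow> y \<le> q!i) \<and> (p!i \<le> x \<longleftrightarrow> q!i \<le> y))"
  unfolding oiso_def by (auto simp: less_Suc_eq_0_disj nth_Cons split: nat.splits)

lemma oiso_snoc: "length q = length p \<Longrightarrow> oiso (q@[y]) (p@[x]) \<longleftrightarrow> oiso q p \<and>
   (\<forall>i<length p. (x \<le> p!i \<longleftrightarrow> y \<le> q!i) \<and> (p!i \<le> x \<longleftrightarrow> q!i \<le> y))"
  unfolding oiso_def by (auto simp: nth_append less_Suc_eq)

lemma oiso_Nil1[simp]: "oiso [] p \<longleftrightarrow> p = []" unfolding oiso_def by auto
lemma oiso_Nil2[simp]: "oiso q [] \<longleftrightarrow> q = []" unfolding oiso_def by auto
lemma oiso_length: "oiso q p \<Longrightarrow> length q = length p" unfolding oiso_def by auto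

lemma oiso_less: "oiso q p \<Longrightarrow> i < length p \<Longrightarrow> j < length p \<Longrightarrow> (p!i < p!j \<longleftrightarrow> q!i < q!j)"
  unfolding oiso_def by (meson not_le)

lemma oiso_sym: "oiso q p \<Longrightarrow> oiso p q" unfolding oiso_def by auto
lemma oiso_trans: "oiso q p \<Longrightarrow> oiso p r \<Longrightarrow> oiso q r" unfolding oiso_def by auto

lemma oiso_shift: "oiso (map (\<lambda>x. x + m) q) q" unfolding oiso_def by auto

lemma oiso_take: "oiso q p \<Longrightarrow> oiso (take k q) (take k p)"
  unfolding oiso_def by auto

lemma oiso_drop: "oiso q p \<Longrightarrow> oiso (drop k q) (drop k p)"
  unfolding oiso_def by auto

lemma contains_subseq: "contains v p \<Longrightarrow> subseq v w \<Longrightarrow> contains w p"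
  unfolding contains_conv using subseq_order.trans by blast

lemma contains_shift: "contains (map (\<lambda>x. x + m) s) p \<longleftrightarrow> contains s p"
proof
  assume "contains (map (\<lambda>x. x + m) s) p"
  then obtain f where f: "\<forall>i j. i < j \<longrightarrow> j < length p \<longrightarrow> f i < f j" "\<forall>i < length p. f i < length s"
      "\<forall>i < length p. \<forall>j < length p. (p ! i \<le> p ! j \<longleftrightarrow> map (\<lambda>x. x + m) s ! f i \<le> map (\<lambda>x. x + m) s ! f j)"
    unfolding contains_def length_map by blast
  have "\<forall>i < length p. \<forall>j < length p. (p ! i \<le> p ! j \<longleftrightarrow> s ! f i \<le> s ! f j)"
  proof (intro allI impI)
    fix i j assume "i < length p" "j < length p"
    then show "(p ! i \<le> p ! j \<longleftrightarrow> s ! f i \<le> s ! f j)" using f(2) f(3)[rule_format, of i j] by simp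
  qed
  then show "contains s p" unfolding contains_def using f(1,2) by blast
next
  assume "contains s p"
  then obtain f where f: "\<forall>i j. i < j \<longrightarrow> j < length p \<longrightarrow> f i < f j" "\<forall>i < length p. f i < length s"
      "\<forall>i < length p. \<forall>j < length p. (p ! i \<le> p ! j \<longleftrightarrow> s ! f i \<le> s ! f j)"
    unfolding contains_def length_map by blast
  have "\<forall>i < length p. \<forall>j < length p. (p ! i \<le> p ! j \<longleftrightarrow> map (\<lambda>x. x + m) s ! f i \<le> map (\<lambda>x. x + m) s ! f j)"
  proof (intro allI impI)
    fix i j assume "i < length p" "j < length p"
    then show "(p ! i \<le> p ! j \<longleftrightarrow> map (\<lambda>x. x + m) s ! f i \<le> map (\<lambda>x. x + m) s ! f j)" using f(2) f(3)[rule_format, of i j] by simp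
  qed
  moreover have "\<forall>i < length p. f i < length (map (\<lambda>x. x + m) s)" using f(2) by simp
  ultimately show "contains (map (\<lambda>x. x + m) s) p" unfolding contains_def using f(1) by blast
qed

lemma contains_Nil: "contains w []" unfolding contains_def by simp

lemma contains_Nil_w: "contains [] p \<longleftrightarrow> p = []" unfolding contains_def by auto

lemma contains_prefix: "contains w (p @ r) \<Longrightarrow> contains w p"
proof -
  assume "contains w (p @ r)"
  then obtain q where q: "subseq q w" "oiso q (p @ r)" unfolding contains_conv by blast
  have "oiso (take (length p) q) p" using oiso_take[OF q(2), of "length p"] by simp
  moreover have "subseq (take (length p) q) w"
    using q(1) by (meson subseq_order.trans prefix_imp_subseq take_is_prefix)
  ultimately show ?thesis unfolding contains_conv by blast
qed

lemma contains_tl: "contains w (x # r) \<Longrightarrow> contains w r"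
proof -
  assume "contains w (x # r)"
  then obtain q where q: "subseq q w" "oiso q (x # r)" unfolding contains_conv by blast
  have "oiso (drop 1 q) r" using oiso_drop[OF q(2), of 1] by simp
  moreover have "subseq (drop 1 q) w"
    using q(1) by (meson subseq_order.trans suffix_imp_subseq suffix_drop)
  ultimately show ?thesis unfolding contains_conv by blast
qed

definition nsplit :: "nat list \<Rightarrow> bool" where
  "nsplit p \<longleftrightarrow> (\<forall>k. 0 < k \<longrightarrow> k < length p \<longrightarrow> \<not> (\<forall>i<k. \<forall>j. k \<le> j \<longrightarrow> j < length p \<longrightarrow> p!i < p!j))"

lemma subseq_set: "subseq xs ys \<Longrightarrow> set xs \<subseteq> set ys"
  by (induction rule: list_emb.induct) auto

lemma contains_concat:
  assumes ns: "nsplit p" and lt: "\<forall>a\<in>set \<alpha>. \<forall>b\<in>set \<gamma>. a < b"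
  shows "contains (\<alpha> @ \<gamma>) p \<longleftrightarrow> contains \<alpha> p \<or> contains \<gamma> p"
proof
  assume "contains (\<alpha> @ \<gamma>) p"
  then obtain q where q: "subseq q (\<alpha> @ \<gamma>)" "oiso q p" unfolding contains_conv by blast
  from q(1) obtain q1 q2 where qq: "q = q1 @ q2" "subseq q1 \<alpha>" "subseq q2 \<gamma>" by (rule subseq_appendE)
  show "contains \<alpha> p \<or> contains \<gamma> p"
  proof (cases "q1 = [] \<or> q2 = []")
    case True then show ?thesis using qq q(2) unfolding contains_conv by auto
  next
    case False
    let ?k = "length q1"
    have len: "length q = length p" using q(2) oiso_length by blast
    have "0 < ?k" "?k < length p" using False len qq(1) by (auto simp flip: length_greater_0_conv)
    moreover have "\<forall>i<?k. \<forall>j. ?k \<le> j \<longrightarrow> j < length p \<longrightarrow> p!i < p!j"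
    proof (intro allI impI)
      fix i j assume ij: "i < ?k" "?k \<le> j" "j < length p"
      have "q!i = q1!i" using ij qq(1) by (simp add: nth_append)
      then have a: "q!i \<in> set \<alpha>" using ij subseq_set[OF qq(2)] by auto
      have "q!j = q2!(j - ?k)" using ij qq(1) by (simp add: nth_append)
      then have b: "q!j \<in> set \<gamma>" using ij len qq(1) subseq_set[OF qq(3)] by auto
      have "q!i < q!j" using lt a b by blast
      then show "p!i < p!j" using oiso_less[OF q(2)] ij by auto
    qed
    ultimately have False using ns[unfolded nsplit_def, rule_format, of ?k] by blast
    then show ?thesis ..
  qed
next
  assume "contains \<alpha> p \<or> contains \<gamma> p"
  then show "contains (\<alpha> @ \<gamma>) p"
  proof
    assume "contains \<alpha> p" then show ?thesis
      by (rule contains_subseq) (rule subseq_rev_drop_many, rule subseq_order.refl)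
  next
    assume "contains \<gamma> p" then show ?thesis
      by (rule contains_subseq) (rule subseq_drop_many, rule subseq_order.refl)
  qed
qed

lemma subseq_snoc_cases: "subseq q (u @ [y]) \<Longrightarrow> subseq q u \<or> (\<exists>q'. q = q' @ [y] \<and> subseq q' u)"
proof -
  assume "subseq q (u @ [y])"
  then obtain q1 q2 where "q = q1 @ q2" "subseq q1 u" "subseq q2 [y]" by (rule subseq_appendE)
  moreover have "q2 = [] \<or> q2 = [y]" using \<open>subseq q2 [y]\<close>
    by (cases q2) (auto simp: list_emb_code split: if_splits)
  ultimately show ?thesis by auto
qed

lemma oiso_split_nsplit:
  assumes "oiso (a @ b) p" "nsplit p" "\<forall>x\<in>set a. \<forall>y\<in>set b. x < y"
  shows "a = [] \<or> b = []"
proof (rule ccontr)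
  assume ne: "\<not> (a = [] \<or> b = [])"
  let ?q = "a @ b" and ?k = "length a"
  have len: "length ?q = length p" using assms(1) oiso_length by blast
  have "0 < ?k" "?k < length p" using ne len by (auto simp flip: length_greater_0_conv)
  moreover have "\<forall>i<?k. \<forall>j. ?k \<le> j \<longrightarrow> j < length p \<longrightarrow> p!i < p!j"
  proof (intro allI impI)
    fix i j assume ij: "i < ?k" "?k \<le> j" "j < length p"
    have "?q!i = a!i" using ij by (simp add: nth_append)
    then have x: "?q!i \<in> set a" using ij by auto
    have "?q!j = b!(j - ?k)" using ij by (simp add: nth_append)
    then have y: "?q!j \<in> set b" using ij len by auto
    have "?q!i < ?q!j" using assms(3) x y by blast
    then show "p!i < p!j" using oiso_less[OF assms(1)] ij by auto
  qed
  ultimately show False using assms(2)[unfolded nsplit_def, rule_format, of ?k] by blast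
qed

lemma oiso_cons_min:
  assumes "oiso q p" "\<forall>a\<in>set q. y < a" "\<forall>b\<in>set p. x < b" shows "oiso (y#q) (x#p)"
proof -
  have l: "length q = length p" using assms(1) oiso_length by blast
  have "\<forall>i<length p. (x \<le> p!i \<longleftrightarrow> y \<le> q!i) \<and> (p!i \<le> x \<longleftrightarrow> q!i \<le> y)"
  proof (intro allI impI)
    fix i assume i: "i < length p"
    have "p!i \<in> set p" "q!i \<in> set q" using i l by auto
    then have "x < p!i" "y < q!i" using assms by auto
    then show "(x \<le> p!i \<longleftrightarrow> y \<le> q!i) \<and> (p!i \<le> x \<longleftrightarrow> q!i \<le> y)" by auto
  qed
  then show ?thesis using assms(1) by (simp add: oiso_Cons)
qed

lemma oiso_cons_dest:
  assumes "oiso (y#q) (x#p)" "\<forall>b\<in>set p. x < b" shows "oiso q p \<and> (\<forall>a\<in>set q. y < a)"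
proof -
  have o: "oiso q p" and c: "\<forall>i<length p. (x \<le> p!i \<longleftrightarrow> y \<le> q!i) \<and> (p!i \<le> x \<longleftrightarrow> q!i \<le> y)"
    using assms(1) by (simp_all add: oiso_Cons)
  have l: "length q = length p" using o oiso_length by blast
  have "\<forall>a\<in>set q. y < a"
  proof
    fix a assume "a \<in> set q"
    then obtain i where i: "i < length q" "a = q!i" by (auto simp: in_set_conv_nth)
    have "x < p!i" using assms(2) i l by auto
    then have "\<not> (q!i \<le> y)" using c i l by auto
    then show "y < a" using i by simp
  qed
  then show ?thesis using o by simp
qed

lemma oiso_wrap:
  assumes "oiso q p" "\<forall>a\<in>set q. y < a" "\<forall>b\<in>set p. x < b" shows "oiso (y # q @ [y]) (x # p @ [x])"
proof -
  have l: "length q = length p" using assms(1) oiso_length by blast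
  have "\<forall>i<length p. (x \<le> p!i \<longleftrightarrow> y \<le> q!i) \<and> (p!i \<le> x \<longleftrightarrow> q!i \<le> y)"
  proof (intro allI impI)
    fix i assume i: "i < length p"
    have "p!i \<in> set p" "q!i \<in> set q" using i l by auto
    then have "x < p!i" "y < q!i" using assms by auto
    then show "(x \<le> p!i \<longleftrightarrow> y \<le> q!i) \<and> (p!i \<le> x \<longleftrightarrow> q!i \<le> y)" by auto
  qed
  then have o2: "oiso (q @ [y]) (p @ [x])" using assms(1) l by (simp add: oiso_snoc)
  have "\<forall>i<length (p @ [x]). (x \<le> (p @ [x])!i \<longleftrightarrow> y \<le> (q @ [y])!i) \<and> ((p @ [x])!i \<le> x \<longleftrightarrow> (q @ [y])!i \<le> y)"
  proof (intro allI impI)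
    fix i assume i: "i < length (p @ [x])"
    show "(x \<le> (p @ [x])!i \<longleftrightarrow> y \<le> (q @ [y])!i) \<and> ((p @ [x])!i \<le> x \<longleftrightarrow> (q @ [y])!i \<le> y)"
    proof (cases "i < length p")
      case True
      have "p!i \<in> set p" "q!i \<in> set q" using True l by auto
      then have "x < p!i" "y < q!i" using assms by auto
      then show ?thesis using True l by (simp add: nth_append)
    next
      case False
      then have "i = length p" using i by simp
      then show ?thesis using l by (simp add: nth_append)
    qed
  qed
  then show ?thesis using o2 by (simp add: oiso_Cons)
qed

lemma contains_pshift: "contains w (map (\<lambda>x. x + k) p) \<longleftrightarrow> contains w p"
  unfolding contains_def by simp

lemma subseq_map': "subseq xs ys \<Longrightarrow> subseq (map f xs) (map f ys)"
  by (induction rule: list_emb.induct) auto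

lemma nsplit_conn:
  assumes r: "rgf \<sigma>" and c: "connected_part \<sigma>" shows "nsplit \<sigma>"
  unfolding nsplit_def
proof (intro allI impI notI)
  fix k assume k: "0 < k" "k < length \<sigma>" and sp: "\<forall>i<k. \<forall>j. k \<le> j \<longrightarrow> j < length \<sigma> \<longrightarrow> \<sigma>!i < \<sigma>!j"
  define \<alpha> where "\<alpha> = take k \<sigma>"
  define \<gamma> where "\<gamma> = drop k \<sigma>"
  have s: "\<sigma> = \<alpha> @ \<gamma>" unfolding \<alpha>_def \<gamma>_def by simp
  have ra: "rgf \<alpha>" using r s rgf_prefix by metis
  have ne: "\<alpha> \<noteq> []" "\<gamma> \<noteq> []" using k unfolding \<alpha>_def \<gamma>_def by auto
  have lt: "\<forall>a\<in>set \<alpha>. \<forall>b\<in>set \<gamma>. a < b"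
  proof (intro ballI)
    fix a b assume "a \<in> set \<alpha>" "b \<in> set \<gamma>"
    then obtain i j where "i < length \<alpha>" "a = \<alpha>!i" "j < length \<gamma>" "b = \<gamma>!j" by (auto simp: in_set_conv_nth)
    then show "a < b" using sp k unfolding \<alpha>_def \<gamma>_def by auto
  qed
  have gt: "\<forall>x\<in>set \<gamma>. mx \<alpha> < x" using lt mx_in[OF ne(1)] by blast
  define \<beta> where "\<beta> = map (\<lambda>x. x - mx \<alpha>) \<gamma>"
  have rb: "rgf \<beta>" unfolding \<beta>_def using rgf_suffix r s gt by metis
  have "concat_part \<alpha> \<beta> = \<sigma>"
    unfolding concat_part_def shift_def nblocks_rgf[OF ra] \<beta>_def s using gt
    by (simp; intro map_idI; auto)
  moreover have "\<beta> \<noteq> []" using ne unfolding \<beta>_def by simp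
  ultimately show False using c ra rb ne unfolding connected_part_def by blast
qed

lemma nsplit_1212: "nsplit [1,2,1,2]"
  unfolding nsplit_def
proof (intro allI impI notI)
  fix k :: nat assume k: "0 < k" "k < length [1::nat,2,1,2]"
    and H: "\<forall>i<k. \<forall>j. k \<le> j \<longrightarrow> j < length [1::nat,2,1,2] \<longrightarrow> [1::nat,2,1,2]!i < [1,2,1,2]!j"
  have "k = 1 \<or> k = 2 \<or> k = 3" using k by auto
  then show False
  proof (elim disjE)
    assume "k = 1" then show False using H[rule_format, of 0 2] by simp
  next
    assume "k = 2" then show False using H[rule_format, of 0 2] by simp
  next
    assume "k = 3" then show False using H[rule_format, of 1 3] by simp
  qed
qed

lemma nsplit_wrap: "nsplit (x # r @ [x])"
  unfolding nsplit_def
proof (intro allI impI notI)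
  fix k assume k: "0 < k" "k < length (x # r @ [x])"
    and H: "\<forall>i<k. \<forall>j. k \<le> j \<longrightarrow> j < length (x # r @ [x]) \<longrightarrow> (x # r @ [x])!i < (x # r @ [x])!j"
  have "(x # r @ [x])!0 < (x # r @ [x])!(Suc (length r))" using H[rule_format, of 0 "Suc (length r)"] k by simp
  then show False by (simp add: nth_append)
qed

lemma dec_facts:
  assumes ru: "rgf u" and rs: "rgf s"
  defines "m \<equiv> mx (u @ [1])"
  shows "rgf (u @ [1])" "1 \<le> m" "\<forall>a\<in>set (u @ [1]). 1 \<le> a \<and> a \<le> m"
    "\<forall>b\<in>set (map (\<lambda>x. x + m) s). m < b"
proof -
  show r1: "rgf (u @ [1])" using ru by (simp add: rgf_snoc)
  show "1 \<le> m" unfolding m_def by (rule mx_ge) simp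
  show "\<forall>a\<in>set (u @ [1]). 1 \<le> a \<and> a \<le> m" using rgf_pos[OF r1] mx_ge unfolding m_def by blast
  show "\<forall>b\<in>set (map (\<lambda>x. x + m) s). m < b" using rgf_pos[OF rs] by fastforce
qed

lemma PF:
  assumes ru: "rgf u" and rs: "rgf s" and r\<sigma>: "rgf \<sigma>" and ns: "nsplit \<sigma>"
  defines "m \<equiv> mx (u @ [1])"
  shows "contains (u @ [1] @ map (\<lambda>x. x + m) s) (1 # map (\<lambda>x. x + 1) \<sigma>) \<longleftrightarrow>
         contains u (1 # map (\<lambda>x. x + 1) \<sigma>) \<or> contains s \<sigma>"
proof -
  note F = dec_facts[OF ru rs, folded m_def]
  let ?S = "map (\<lambda>x. x + m) s"
  let ?P = "1 # map (\<lambda>x. x + 1) \<sigma>"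
  have big: "\<forall>b\<in>set (map (\<lambda>x. x + 1) \<sigma>). 1 < b" using rgf_pos[OF r\<sigma>] by fastforce
  show ?thesis
  proof
    assume "contains (u @ [1] @ ?S) ?P"
    then obtain q where q: "subseq q ((u @ [1]) @ ?S)" "oiso q ?P" unfolding contains_conv by auto
    obtain x q' where qx: "q = x # q'" using q(2) oiso_length by (cases q) auto
    have oq: "oiso q' (map (\<lambda>x. x + 1) \<sigma>)" and xl: "\<forall>a\<in>set q'. x < a"
      using oiso_cons_dest[OF q(2)[unfolded qx] big] by auto
    have oq\<sigma>: "oiso q' \<sigma>" using oiso_trans[OF oq oiso_shift] .
    from q(1) obtain q1 q2 where qq: "q = q1 @ q2" "subseq q1 (u @ [1])" "subseq q2 ?S" by (rule subseq_appendE)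
    show "contains u ?P \<or> contains s \<sigma>"
    proof (cases q1)
      case Nil
      then have "contains ?S ?P" using qq q(2) unfolding contains_conv by auto
      then have "contains ?S \<sigma>" using contains_tl contains_pshift by blast
      then show ?thesis using contains_shift by blast
    next
      case (Cons x1 q1')
      have x1: "x1 = x" "q' = q1' @ q2" using qq(1) qx Cons by auto
      have "\<forall>a\<in>set q1'. \<forall>b\<in>set q2. a < b"
      proof (intro ballI)
        fix a b assume ab: "a \<in> set q1'" "b \<in> set q2"
        have "a \<in> set (u @ [1])" using subseq_set[OF qq(2)] Cons ab(1) by auto
        then have "a \<le> m" using F(3) by blast
        moreover have "b \<in> set ?S" using subseq_set[OF qq(3)] ab(2) by auto
        then have "m < b" using F(4) by blast
        ultimately show "a < b" by linarith
      qed
      then have "q1' = [] \<or> q2 = []" by (rule oiso_split_nsplit[OF oq\<sigma>[unfolded x1(2)] ns])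
      then show ?thesis
      proof
        assume "q1' = []"
        then have "oiso q2 \<sigma>" using oq\<sigma> x1 by simp
        then have "contains ?S \<sigma>" using qq(3) unfolding contains_conv by auto
        then show ?thesis using contains_shift by blast
      next
        assume q2: "q2 = []"
        then have sq: "subseq q (u @ [1])" using qq by simp
        from subseq_snoc_cases[OF sq] show ?thesis
        proof
          assume "subseq q u" then show ?thesis using q(2) unfolding contains_conv by auto
        next
          assume "\<exists>q''. q = q'' @ [1] \<and> subseq q'' u"
          then obtain q'' where q'': "q = q'' @ [1]" by blast
          show ?thesis
          proof (cases "q' = []")
            case True
            then have "\<sigma> = []" using oq\<sigma> by simp
            then show ?thesis using contains_Nil by simp
          next
            case False
            have "x \<in> set (u @ [1])" using subseq_set[OF sq] qx by auto
            then have "1 \<le> x" using F(3) by blast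
            moreover have "last q = last q'" using qx False by simp
            moreover have "last q' \<in> set q'" using False by simp
            ultimately have "1 < last q" using xl by fastforce
            then show ?thesis using q'' by simp
          qed
        qed
      qed
    qed
  next
    assume "contains u ?P \<or> contains s \<sigma>"
    then show "contains (u @ [1] @ ?S) ?P"
    proof
      assume "contains u ?P" then show ?thesis
        by (rule contains_subseq) (rule subseq_rev_drop_many, rule subseq_order.refl)
    next
      assume "contains s \<sigma>"
      then obtain q where q: "subseq q s" "oiso q \<sigma>" unfolding contains_conv by auto
      have "subseq (map (\<lambda>x. x + m) q) ?S" using subseq_map'[OF q(1)] .
      then have "subseq ([1] @ map (\<lambda>x. x + m) q) ((u @ [1]) @ ?S)"
        by (intro list_emb_append_mono) (auto intro: subseq_drop_many)
      moreover have "oiso (1 # map (\<lambda>x. x + m) q) ?P"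
      proof (rule oiso_cons_min)
        show "oiso (map (\<lambda>x. x + m) q) (map (\<lambda>x. x + 1) \<sigma>)"
          by (rule oiso_trans[OF oiso_shift], rule oiso_trans[OF q(2)], rule oiso_sym, rule oiso_shift)
        show "\<forall>a\<in>set (map (\<lambda>x. x + m) q). 1 < a" using subseq_set[OF q(1)] rgf_pos[OF rs] F(2) by fastforce
        show "\<forall>b\<in>set (map (\<lambda>x. x + 1) \<sigma>). 1 < b" using big .
      qed
      ultimately show ?thesis unfolding contains_conv by auto
    qed
  qed
qed

lemma PG:
  assumes ru: "rgf u" and rs: "rgf s" and r\<rho>: "rgf \<rho>"
  defines "m \<equiv> mx (u @ [1])"
  shows "contains (u @ [1] @ map (\<lambda>x. x + m) s) (1 # map (\<lambda>x. x + 1) \<rho> @ [1]) \<longleftrightarrow>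
         contains u (1 # map (\<lambda>x. x + 1) \<rho>) \<or> contains s (1 # map (\<lambda>x. x + 1) \<rho> @ [1])"
proof -
  note F = dec_facts[OF ru rs, folded m_def]
  let ?S = "map (\<lambda>x. x + m) s"
  let ?T = "1 # map (\<lambda>x. x + 1) \<rho>"
  let ?T1 = "1 # map (\<lambda>x. x + 1) \<rho> @ [1]"
  have big: "\<forall>b\<in>set (map (\<lambda>x. x + 1) \<rho>). 1 < b" using rgf_pos[OF r\<rho>] by fastforce
  have lt: "\<forall>a\<in>set (u @ [1]). \<forall>b\<in>set ?S. a < b"
  proof (intro ballI)
    fix a b assume "a \<in> set (u @ [1])" "b \<in> set ?S"
    then have "a \<le> m" "m < b" using F(3,4) by blast+
    then show "a < b" by linarith
  qed
  have "contains ((u @ [1]) @ ?S) ?T1 \<longleftrightarrow> contains (u @ [1]) ?T1 \<or> contains ?S ?T1"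
    by (rule contains_concat[OF nsplit_wrap lt])
  moreover have "contains ?S ?T1 \<longleftrightarrow> contains s ?T1" by (rule contains_shift)
  moreover have "contains (u @ [1]) ?T1 \<longleftrightarrow> contains u ?T"
  proof
    assume "contains (u @ [1]) ?T1"
    then obtain q where q: "subseq q (u @ [1])" "oiso q ?T1" unfolding contains_conv by auto
    from subseq_snoc_cases[OF q(1)] show "contains u ?T"
    proof
      assume "subseq q u"
      then have "contains u ?T1" using q(2) unfolding contains_conv by auto
      then show ?thesis using contains_prefix[of u ?T "[1]"] by simp
    next
      assume "\<exists>q''. q = q'' @ [1] \<and> subseq q'' u"
      then obtain q'' where q'': "q = q'' @ [1]" "subseq q'' u" by blast
      have "oiso (take (length ?T) q) (take (length ?T) ?T1)" by (rule oiso_take[OF q(2)])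
      moreover have "length q'' = length ?T" using oiso_length[OF q(2)] q''(1) by simp
      ultimately have "oiso q'' ?T" using q''(1) by simp
      then show ?thesis using q''(2) unfolding contains_conv by auto
    qed
  next
    assume "contains u ?T"
    then obtain q where q: "subseq q u" "oiso q ?T" unfolding contains_conv by auto
    obtain x q' where qx: "q = x # q'" using q(2) oiso_length by (cases q) auto
    have oq: "oiso q' (map (\<lambda>x. x + 1) \<rho>)" and xl: "\<forall>a\<in>set q'. x < a"
      using oiso_cons_dest[OF q(2)[unfolded qx] big] by auto
    have "u \<noteq> []" using q(1) qx by auto
    then obtain u' where u': "u = 1 # u'" using rgf_Cons[OF ru] by blast
    have "x \<in> set u" using subseq_set[OF q(1)] qx by auto
    then have x1: "1 \<le> x" using rgf_pos[OF ru] by blast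
    have sq': "subseq q' u'" using q(1) qx u' by (cases "x = 1") (auto dest: subseq_Cons')
    have "subseq (1 # q' @ [1]) (u @ [1])" using sq' u' by simp
    moreover have "oiso (1 # q' @ [1]) ?T1"
      by (rule oiso_wrap[OF oq]) (use xl x1 big in auto)
    ultimately show "contains (u @ [1]) ?T1" unfolding contains_conv by blast
  qed
  ultimately show ?thesis by simp
qed

definition dec :: "nat list \<Rightarrow> nat list \<Rightarrow> nat list" where
  "dec u s = u @ [1] @ map (\<lambda>x. x + mx (u @ [1])) s"

lemma concat_dec: "rgf u \<Longrightarrow> concat_part (u @ [1]) s = dec u s"
  unfolding concat_part_def dec_def shift_def
  by (subst nblocks_rgf) (simp_all add: rgf_snoc)

lemma rgf_dec: "rgf u \<Longrightarrow> rgf s \<Longrightarrow> rgf (dec u s)"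
  unfolding dec_def using rgf_concat[of "u @ [1]" s] by (simp add: rgf_snoc)

lemma all4: "(\<forall>i<(4::nat). P i) \<longleftrightarrow> P 0 \<and> P 1 \<and> P 2 \<and> P 3"
  by (auto simp: less_Suc_eq numeral_eq_Suc)

lemma all_Suc_lt: "(\<forall>i<Suc n. P i) \<longleftrightarrow> P 0 \<and> (\<forall>i<n. P (Suc i))"
  by (auto simp: less_Suc_eq_0_disj)

lemma oiso_1b1b: "2 \<le> b \<Longrightarrow> oiso [1,b,1,b] [1,2,1,2]"
  unfolding oiso_def by (simp add: all_Suc_lt)

lemma nc_dec:
  assumes ru: "rgf u" and rs: "rgf s" and nu: "noncrossing u" and ns: "noncrossing s"
  shows "noncrossing (dec u s)"
proof -
  note F = dec_facts[OF ru rs]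
  let ?m = "mx (u @ [1])"
  let ?S = "map (\<lambda>x. x + ?m) s"
  have lt: "\<forall>a\<in>set (u @ [1]). \<forall>b\<in>set ?S. a < b"
  proof (intro ballI)
    fix a b assume "a \<in> set (u @ [1])" "b \<in> set ?S"
    then have "a \<le> ?m" "?m < b" using F(3,4) by blast+
    then show "a < b" by linarith
  qed
  have c: "contains ((u @ [1]) @ ?S) [1,2,1,2] \<longleftrightarrow> contains (u @ [1]) [1,2,1,2] \<or> contains ?S [1,2,1,2]"
    by (rule contains_concat[OF nsplit_1212 lt])
  have "\<not> contains ?S [1,2,1,2]" using ns contains_shift unfolding noncrossing_def avoids_def by blast
  moreover have "\<not> contains (u @ [1]) [1,2,1,2]"
  proof
    assume "contains (u @ [1]) [1,2,1,2]"
    then obtain q where q: "subseq q (u @ [1])" "oiso q [1,2,1,2]" unfolding contains_conv by auto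
    from subseq_snoc_cases[OF q(1)] show False
    proof
      assume "subseq q u" then show False using q(2) nu unfolding contains_conv noncrossing_def avoids_def by auto
    next
      assume "\<exists>q'. q = q' @ [1] \<and> subseq q' u"
      then obtain q' where q': "q = q' @ [1]" by blast
      have l: "length q = 4" using oiso_length[OF q(2)] by simp
      have "q!3 = 1" using q' l by (simp add: nth_append)
      moreover have "q!1 \<le> q!3"
      proof -
        have "\<forall>i<4. \<forall>j<4. ([1,2,1,2::nat] ! i \<le> [1,2,1,2] ! j) = (q ! i \<le> q ! j)"
          using q(2) unfolding oiso_def by simp
        from this[rule_format, of 1 3] show ?thesis by simp
      qed
      moreover have "q!0 < q!1" using oiso_less[OF q(2), of 0 1] by simp
      moreover have "q!0 \<in> set (u @ [1])" using subseq_set[OF q(1)] l by (metis nth_mem zero_less_numeral subsetD)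
      then have "1 \<le> q!0" using F(3) by blast
      ultimately show False by linarith
    qed
  qed
  ultimately show ?thesis using c unfolding noncrossing_def avoids_def dec_def by simp
qed

lemma app_unique: "a @ y # b = a' @ y # b' \<Longrightarrow> y \<notin> set a \<Longrightarrow> y \<notin> set a' \<Longrightarrow> a = a' \<and> b = b'"
proof (induction a arbitrary: a')
  case Nil then show ?case by (cases a') auto
next
  case (Cons x a) then show ?case by (cases a') auto
qed

lemma dec_inj:
  assumes "rgf u" "rgf s" "rgf u'" "rgf s'" "dec u s = dec u' s'"
  shows "u = u' \<and> s = s'"
proof -
  note F1 = dec_facts[OF assms(1,2)] and F2 = dec_facts[OF assms(3,4)]
  let ?S = "map (\<lambda>x. x + mx (u @ [1])) s" and ?S' = "map (\<lambda>x. x + mx (u' @ [1])) s'"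
  have n1: "1 \<notin> set ?S" using F1(2,4) by (metis not_less)
  have n2: "1 \<notin> set ?S'" using F2(2,4) by (metis not_less)
  have "rev ?S @ 1 # rev u = rev ?S' @ 1 # rev u'" using arg_cong[OF assms(5)[unfolded dec_def], of rev]
    by simp
  then have "rev ?S = rev ?S' \<and> rev u = rev u'" using n1 n2 by (intro app_unique) auto
  then have uu: "u = u'" and SS: "?S = ?S'" by auto
  have "inj (\<lambda>x::nat. x + mx (u @ [1]))" by (simp add: inj_def)
  then show ?thesis using SS uu by (simp add: inj_map_eq_map)
qed

lemma dec_surj:
  assumes r: "rgf w" and nc: "noncrossing w" and ne: "w \<noteq> []"
  shows "\<exists>u s. w = dec u s \<and> rgf u \<and> rgf s \<and> noncrossing u \<and> noncrossing s \<and> Suc (length u + length s) = length w"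
proof -
  obtain w0 where w0: "w = 1 # w0" using rgf_Cons[OF r ne] by blast
  then have "1 \<in> set w" by simp
  then obtain u v where uv: "w = u @ 1 # v" and n1: "1 \<notin> set v" using split_list_last by metis
  let ?m = "mx (u @ [1])"
  have w2: "w = (u @ [1]) @ v" using uv by simp
  have ru1: "rgf (u @ [1])" using rgf_prefix r w2 by metis
  have ru: "rgf u" using ru1 rgf_prefix by metis
  have gt: "\<forall>b\<in>set v. ?m < b"
  proof (rule ballI, rule ccontr)
    fix b assume b: "b \<in> set v" "\<not> ?m < b"
    have "1 \<le> b" using rgf_pos[OF r] b(1) w2 by auto
    moreover have "b \<noteq> 1" using b(1) n1 by auto
    ultimately have b2: "2 \<le> b" by simp
    have "b \<in> set (u @ [1])" using rgf_set[OF ru1] b2 b(2) by auto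
    then have "b \<in> set u" using b2 by auto
    then have une: "u \<noteq> []" by auto
    then obtain u' where u': "u = 1 # u'" using rgf_Cons[OF ru] by blast
    have "b \<in> set u'" using \<open>b \<in> set u\<close> b2 u' by auto
    then have s1: "subseq [b] u'" by (simp add: subseq_singleton_left)
    have s2: "subseq [b] v" using b(1) by (simp add: subseq_singleton_left)
    have "subseq ([b] @ 1 # [b]) (u' @ 1 # v)" using s1 s2 by (intro list_emb_append_mono) auto
    then have "subseq [1,b,1,b] w" using uv u' by simp
    then have "contains w [1,2,1,2]" using oiso_1b1b[OF b2] unfolding contains_conv by blast
    then show False using nc unfolding noncrossing_def avoids_def by blast
  qed
  define s where "s = map (\<lambda>x. x - ?m) v"
  have rs: "rgf s" unfolding s_def using rgf_suffix r w2 gt by metis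
  have vs: "map (\<lambda>x. x + ?m) s = v" unfolding s_def using gt by (simp; intro map_idI; auto)
  have wd: "w = dec u s" unfolding dec_def vs using uv by simp
  have "subseq u w" using w2 by (metis append_assoc prefix_imp_subseq prefixI)
  then have nu: "noncrossing u" using nc contains_subseq unfolding noncrossing_def avoids_def by blast
  have "subseq v w" using w2 subseq_drop_many[OF subseq_order.refl, of v "u @ [1]"] by simp
  then have ns: "noncrossing s" using nc contains_subseq contains_shift[of ?m s] vs unfolding noncrossing_def avoids_def by metis
  have "Suc (length u + length s) = length w" using uv s_def by simp
  then show ?thesis using wd ru rs nu ns by blast
qed

lemma fin_words: "finite {w. rgf w \<and> length w = k \<and> X w}"
proof (rule finite_subset)
  show "{w. rgf w \<and> length w = k \<and> X w} \<subseteq> {xs. set xs \<subseteq> {0..k} \<and> length xs = k}"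
    using rgf_bound by fastforce
  show "finite {xs. set xs \<subseteq> {0..k} \<and> length xs = (k::nat)}" by (rule finite_lists_length_eq) simp
qed

lemma sum_rev_atMost: "(\<Sum>i\<le>n. h i) = (\<Sum>i\<le>(n::nat). h (n - i))"
  by (rule sum.reindex_bij_witness[where i="\<lambda>i. n - i" and j="\<lambda>i. n - i"]) auto

lemma count_dec:
  assumes H: "\<And>u s. rgf u \<Longrightarrow> rgf s \<Longrightarrow> noncrossing u \<Longrightarrow> noncrossing s \<Longrightarrow> P (dec u s) \<longleftrightarrow> Q u \<and> R s"
  shows "card {w. rgf w \<and> length w = Suc n \<and> noncrossing w \<and> P w} =
    (\<Sum>i\<le>n. card {u. rgf u \<and> length u = i \<and> noncrossing u \<and> Q u} * card {s. rgf s \<and> length s = n - i \<and> noncrossing s \<and> R s})"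
proof -
  define A where "A i = {u. rgf u \<and> length u = i \<and> noncrossing u \<and> Q u}" for i
  define B where "B i = {s. rgf s \<and> length s = n - i \<and> noncrossing s \<and> R s}" for i
  let ?U = "\<Union>i\<in>{..n}. A i \<times> B i"
  let ?d = "\<lambda>(u, s). dec u s"
  have eq: "{w. rgf w \<and> length w = Suc n \<and> noncrossing w \<and> P w} = ?d ` ?U"
  proof (intro equalityI subsetI)
    fix w assume "w \<in> {w. rgf w \<and> length w = Suc n \<and> noncrossing w \<and> P w}"
    then have w: "rgf w" "length w = Suc n" "noncrossing w" "P w" by auto
    then have "w \<noteq> []" by auto
    from dec_surj[OF w(1,3) this] obtain u s where us: "w = dec u s" "rgf u" "rgf s" "noncrossing u" "noncrossing s"
      "Suc (length u + length s) = length w" by blast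
    have "Q u \<and> R s" using H[OF us(2-5)] w(4) us(1) by simp
    then have "(u, s) \<in> A (length u) \<times> B (length u)" "length u \<in> {..n}"
      using us w(2) unfolding A_def B_def by auto
    then show "w \<in> ?d ` ?U" using us(1) by force
  next
    fix w assume "w \<in> ?d ` ?U"
    then obtain u s i where us: "w = dec u s" "i \<le> n" "u \<in> A i" "s \<in> B i" by auto
    then have u: "rgf u" "length u = i" "noncrossing u" "Q u" and s: "rgf s" "length s = n - i" "noncrossing s" "R s"
      unfolding A_def B_def by auto
    have "rgf w" using rgf_dec[OF u(1) s(1)] us(1) by simp
    moreover have "noncrossing w" using nc_dec[OF u(1) s(1) u(3) s(3)] us(1) by simp
    moreover have "P w" using H[OF u(1) s(1) u(3) s(3)] u(4) s(4) us(1) by simp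
    moreover have "length w = Suc n" using us(1,2) u(2) s(2) unfolding dec_def by simp
    ultimately show "w \<in> {w. rgf w \<and> length w = Suc n \<and> noncrossing w \<and> P w}" by simp
  qed
  have inj: "inj_on ?d ?U"
  proof (rule inj_onI)
    fix x y assume "x \<in> ?U" "y \<in> ?U" "?d x = ?d y"
    then show "x = y" using dec_inj unfolding A_def B_def by (cases x; cases y) auto
  qed
  have finA: "finite (A i)" for i unfolding A_def by (rule fin_words)
  have finB: "finite (B i)" for i unfolding B_def by (rule fin_words)
  have "card (?d ` ?U) = card ?U" by (rule card_image[OF inj])
  also have "\<dots> = (\<Sum>i\<le>n. card (A i \<times> B i))"
  proof (rule card_UN_disjoint)
    show "finite {..n}" by simp
    show "\<forall>i\<in>{..n}. finite (A i \<times> B i)" using finA finB by simp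
    show "\<forall>i\<in>{..n}. \<forall>j\<in>{..n}. i \<noteq> j \<longrightarrow> (A i \<times> B i) \<inter> (A j \<times> B j) = {}"
      unfolding A_def by auto
  qed
  also have "\<dots> = (\<Sum>i\<le>n. card (A i) * card (B i))" by (simp add: card_cartesian_product)
  finally show ?thesis using eq unfolding A_def B_def by simp
qed

lemma count_zero: "p \<noteq> [] \<Longrightarrow> nc_count p 0 = 1"
proof -
  assume p: "p \<noteq> []"
  have "{w. rgf w \<and> length w = 0 \<and> noncrossing w \<and> avoids w p} = {[]}"
    using p by (auto simp: noncrossing_def avoids_def contains_Nil_w)
  then show ?thesis unfolding nc_count_def by simp
qed

theorem theorem3p8:
  fixes \<sigma> \<rho> \<tau> :: "nat list"
  assumes "rgf \<sigma>" and "noncrossing \<sigma>" and "connected_part \<sigma>"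
    and "rgf \<rho>" and "noncrossing \<rho>"
    and "\<tau> = concat_part [1] \<rho>"
    and "nc_equiv \<sigma> \<tau>"
  shows "nc_equiv (concat_part [1] \<sigma>) (\<tau> @ [1])"
proof -
  have nb1: "nblocks [1] = 1" unfolding nblocks_def by simp
  have s1: "concat_part [1] \<sigma> = 1 # map (\<lambda>x. x + 1) \<sigma>" unfolding concat_part_def shift_def nb1 by simp
  have t1: "\<tau> = 1 # map (\<lambda>x. x + 1) \<rho>" using assms(6) unfolding concat_part_def shift_def nb1 by simp
  have ns: "nsplit \<sigma>" by (rule nsplit_conn[OF assms(1,3)])
  define f where "f n = nc_count (concat_part [1] \<sigma>) n" for n
  define g where "g n = nc_count (\<tau> @ [1]) n" for n
  define a where "a n = nc_count \<sigma> n" for n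
  have at: "nc_count \<tau> n = a n" for n using assms(7) unfolding nc_equiv_def a_def by simp
  have fS: "f (Suc n) = (\<Sum>i\<le>n. f i * a (n - i))" for n
    unfolding f_def a_def nc_count_def
  proof (rule count_dec)
    fix u s assume us: "rgf u" "rgf s" "noncrossing u" "noncrossing s"
    show "avoids (dec u s) (concat_part [1] \<sigma>) \<longleftrightarrow> avoids u (concat_part [1] \<sigma>) \<and> avoids s \<sigma>"
      unfolding avoids_def s1 dec_def using PF[OF us(1,2) assms(1) ns] by simp
  qed
  have gS: "g (Suc n) = (\<Sum>i\<le>n. a i * g (n - i))" for n
    unfolding g_def at[symmetric] nc_count_def
  proof (rule count_dec)
    fix u s assume us: "rgf u" "rgf s" "noncrossing u" "noncrossing s"
    show "avoids (dec u s) (\<tau> @ [1]) \<longleftrightarrow> avoids u \<tau> \<and> avoids s (\<tau> @ [1])"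
      unfolding avoids_def t1 dec_def using PG[OF us(1,2) assms(4)] by simp
  qed
  have "f n = g n" for n
  proof (induction n rule: less_induct)
    case (less n)
    show ?case
    proof (cases n)
      case 0
      have "f 0 = 1" unfolding f_def s1 by (rule count_zero) simp
      moreover have "g 0 = 1" unfolding g_def by (rule count_zero) simp
      ultimately show ?thesis using 0 by simp
    next
      case (Suc m)
      have "f n = (\<Sum>i\<le>m. g i * a (m - i))" using fS[of m] less Suc by simp
      also have "\<dots> = (\<Sum>i\<le>m. a (m - i) * g (m - (m - i)))" by (rule sum.cong) auto
      also have "\<dots> = (\<Sum>i\<le>m. a i * g (m - i))" by (rule sum_rev_atMost[symmetric])
      also have "\<dots> = g n" using gS[of m] Suc by simp
      finally show ?thesis .
    qed
  qed
  then show ?thesis unfolding nc_equiv_def f_def g_def by simp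
qed

end
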